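(* Let $\Gamma$ be a linear group, i.e. a group isomorphic to a subgroup of $GL_n(\mathbf k)$ for some field $\mathbf k$ and some $n$. Assume that $\Gamma$ is finite-by-abelian, i.e. $\Gamma$ has a finite normal subgroup $N$ such that $\Gamma/N$ is abelian. Then $\Gamma$ is virtually abelian, i.e. $\Gamma$ has an abelian subgroup of finite index. *)

theory Defs
  imports "Jordan_Normal_Form.Matrix" "HOL-Algebra.Coset"
begin

definition GL :: "nat \<Rightarrow> ('k::field) mat monoid" where
  "GL n = \<lparr>carrier = {A \<in> carrier_mat n n. invertible_mat A}, mult = (*), one = 1\<^sub>m n\<rparr>"

definition linear_group_over :: "'k::field itself \<Rightarrow> ('g, 'b) monoid_scheme \<Rightarrow> bool" where
  "linear_group_over _ G \<longleftrightarrow>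
     (\<exists>n (H :: 'k mat set). subgroup H (GL n) \<and> G \<cong> ((GL n)\<lparr>carrier := H\<rparr>))"

definition finite_by_abelian :: "('g, 'b) monoid_scheme \<Rightarrow> bool" where
  "finite_by_abelian G \<longleftrightarrow> (\<exists>N. N \<lhd> G \<and> finite N \<and> comm_group (G Mod N))"

definition virtually_abelian :: "('g, 'b) monoid_scheme \<Rightarrow> bool" where
  "virtually_abelian G \<longleftrightarrow>
     (\<exists>A. subgroup A G \<and> comm_group (G\<lparr>carrier := A\<rparr>) \<and> finite (rcosets\<^bsub>G\<^esub> A))"

end

theory Submission
  imports Defs
begin

inductive_set mspan :: "nat \<Rightarrow> 'k::field mat set \<Rightarrow> 'k mat set" for n B where
  mspan_zero: "0\<^sub>m n n \<in> mspan n B"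
| mspan_step: "x \<in> mspan n B \<Longrightarrow> b \<in> B \<Longrightarrow> x + c \<cdot>\<^sub>m b \<in> mspan n B"

lemma mspan_carrier:
  assumes "B \<subseteq> carrier_mat n n" "x \<in> mspan n B"
  shows "x \<in> carrier_mat n n"
  using assms(2) by induction (use assms(1) in auto)

lemma mspan_gen:
  assumes "B \<subseteq> carrier_mat n n" "b \<in> B"
  shows "b \<in> mspan n B"
proof -
  have "0\<^sub>m n n + 1 \<cdot>\<^sub>m b \<in> mspan n B" by (rule mspan_step[OF mspan_zero assms(2)])
  moreover have "0\<^sub>m n n + 1 \<cdot>\<^sub>m b = b" using assms by (intro eq_matI) auto
  ultimately show ?thesis by simp
qed

lemma mspan_add:
  assumes B: "B \<subseteq> carrier_mat n n" and x: "x \<in> mspan n B" and y: "y \<in> mspan n B"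
  shows "x + y \<in> mspan n B"
  using y
proof induction
  case mspan_zero
  have "x \<in> carrier_mat n n" using mspan_carrier[OF B x] .
  then have "x + 0\<^sub>m n n = x" by (intro eq_matI) auto
  then show ?case using x by simp
next
  case (mspan_step y b c)
  have xc: "x \<in> carrier_mat n n" using mspan_carrier[OF B x] .
  have yc: "y \<in> carrier_mat n n" using mspan_carrier[OF B mspan_step(1)] .
  have bc: "b \<in> carrier_mat n n" using B mspan_step(2) by auto
  have "x + (y + c \<cdot>\<^sub>m b) = (x + y) + c \<cdot>\<^sub>m b" using xc yc bc by (intro eq_matI) auto
  then show ?case using mspan.mspan_step[OF mspan_step(3) mspan_step(2)] by simp
qed

lemma mspan_smult:
  assumes B: "B \<subseteq> carrier_mat n n" and x: "x \<in> mspan n B"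
  shows "d \<cdot>\<^sub>m x \<in> mspan n B"
  using x
proof induction
  case mspan_zero
  have "d \<cdot>\<^sub>m 0\<^sub>m n n = (0\<^sub>m n n :: 'a mat)" by (intro eq_matI) auto
  then show ?case by (simp add: mspan.mspan_zero)
next
  case (mspan_step y b c)
  have yc: "y \<in> carrier_mat n n" using mspan_carrier[OF B mspan_step(1)] .
  have bc: "b \<in> carrier_mat n n" using B mspan_step(2) by auto
  have "d \<cdot>\<^sub>m (y + c \<cdot>\<^sub>m b) = d \<cdot>\<^sub>m y + (d * c) \<cdot>\<^sub>m b" using yc bc
    by (intro eq_matI) (auto simp: algebra_simps)
  then show ?case using mspan.mspan_step[OF mspan_step(3) mspan_step(2)] by simp
qed

lemma mspan_mono:
  assumes B: "B \<subseteq> carrier_mat n n" and sub: "B' \<subseteq> mspan n B" and x: "x \<in> mspan n B'"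
  shows "x \<in> mspan n B"
  using x
proof induction
  case mspan_zero
  then show ?case by (rule mspan.mspan_zero)
next
  case (mspan_step y b c)
  then show ?case using mspan_add[OF B] mspan_smult[OF B] sub by blast
qed

lemma mspan_comm:
  assumes M: "M \<in> carrier_mat n n" and B: "B \<subseteq> carrier_mat n n"
    and cm: "\<forall>b\<in>B. M * b = b * M" and x: "x \<in> mspan n B"
  shows "M * x = x * M"
  using x
proof induction
  case mspan_zero
  then show ?case using M by simp
next
  case (mspan_step y b c)
  have yc: "y \<in> carrier_mat n n" using mspan_carrier[OF B mspan_step(1)] .
  have bc: "b \<in> carrier_mat n n" using B mspan_step(2) by auto
  have "M * (y + c \<cdot>\<^sub>m b) = M * y + c \<cdot>\<^sub>m (M * b)"
    using M yc bc by (simp add: mult_add_distrib_mat mult_smult_distrib)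
  also have "\<dots> = y * M + c \<cdot>\<^sub>m (b * M)" using mspan_step cm by simp
  also have "\<dots> = (y + c \<cdot>\<^sub>m b) * M"
    using M yc bc by (simp add: add_mult_distrib_mat mult_smult_assoc_mat)
  finally show ?case .
qed


lemma finite_basis_aux:
  fixes P :: "(nat \<times> nat) set"
  assumes "finite P"
  shows "\<forall>T. T \<subseteq> carrier_mat n n \<longrightarrow>
     (\<forall>c\<in>T. \<forall>i<n. \<forall>j<n. (i,j) \<notin> P \<longrightarrow> c $$ (i,j) = 0) \<longrightarrow>
     (\<exists>B\<subseteq>T. finite B \<and> T \<subseteq> mspan n (B :: 'k::field mat set))"
  using assms
proof induction
  case empty
  show ?case
  proof (intro allI impI)
    fix T :: "'k mat set"
    assume T: "T \<subseteq> carrier_mat n n"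
      and z: "\<forall>c\<in>T. \<forall>i<n. \<forall>j<n. (i,j) \<notin> {} \<longrightarrow> c $$ (i,j) = 0"
    have "T \<subseteq> mspan n {}"
    proof
      fix c assume c: "c \<in> T"
      then have "c = 0\<^sub>m n n" using T z by (intro eq_matI) auto
      then show "c \<in> mspan n {}" by (simp add: mspan.mspan_zero)
    qed
    then show "\<exists>B\<subseteq>T. finite B \<and> T \<subseteq> mspan n B" by blast
  qed
next
  case (insert p P)
  show ?case
  proof (intro allI impI)
    fix T :: "'k mat set"
    assume T: "T \<subseteq> carrier_mat n n"
      and z: "\<forall>c\<in>T. \<forall>i<n. \<forall>j<n. (i,j) \<notin> insert p P \<longrightarrow> c $$ (i,j) = 0"
    show "\<exists>B\<subseteq>T. finite B \<and> T \<subseteq> mspan n B"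
    proof (cases "\<forall>c\<in>T. c $$ p = 0")
      case True
      then have "\<forall>c\<in>T. \<forall>i<n. \<forall>j<n. (i,j) \<notin> P \<longrightarrow> c $$ (i,j) = 0"
        using z by (metis insertE)
      from mp[OF mp[OF spec[OF insert.IH, of T] T] this] show ?thesis .
    next
      case False
      then obtain s where s: "s \<in> T" "s $$ p \<noteq> 0" by blast
      have sc: "s \<in> carrier_mat n n" using s T by auto
      define r where "r c = c + (- (c $$ p / s $$ p)) \<cdot>\<^sub>m s" for c
      have rc: "r c \<in> carrier_mat n n" if "c \<in> T" for c
        using that T sc unfolding r_def by auto
      have rz: "\<forall>c\<in>r ` T. \<forall>i<n. \<forall>j<n. (i,j) \<notin> P \<longrightarrow> c $$ (i,j) = 0"
      proof (intro ballI allI impI)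
        fix c' i j assume c': "c' \<in> r ` T" and ij: "i < n" "j < n" and nP: "(i,j) \<notin> P"
        then obtain c where c: "c \<in> T" "c' = r c" by blast
        have cc: "c \<in> carrier_mat n n" using c T by auto
        have e: "c' $$ (i,j) = c $$ (i,j) - (c $$ p / s $$ p) * s $$ (i,j)"
          using c cc sc ij unfolding r_def by simp
        show "c' $$ (i,j) = 0"
        proof (cases "(i,j) = p")
          case True
          then show ?thesis using e s(2) by simp
        next
          case False
          then have "c $$ (i,j) = 0" "s $$ (i,j) = 0" using z c s ij nP by auto
          then show ?thesis using e by simp
        qed
      qed
      have "r ` T \<subseteq> carrier_mat n n" using rc by auto
      from mp[OF mp[OF spec[OF insert.IH, of "r ` T"] this] rz]
      obtain B' where B': "B' \<subseteq> r ` T" "finite B'" "r ` T \<subseteq> mspan n B'"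
        by blast
      obtain B1 where B1: "B1 \<subseteq> T" "finite B1" "B' = r ` B1"
        using finite_subset_image[OF B'(2) B'(1)] by blast
      define B where "B = insert s B1"
      have BT: "B \<subseteq> T" using B1 s unfolding B_def by auto
      have Bc: "B \<subseteq> carrier_mat n n" using BT T by auto
      have sB: "s \<in> mspan n B" using mspan_gen[OF Bc] unfolding B_def by auto
      have "B' \<subseteq> mspan n B"
      proof
        fix x assume "x \<in> B'"
        then obtain b where b: "b \<in> B1" "x = r b" using B1 by blast
        have "b \<in> mspan n B" using mspan_gen[OF Bc] b unfolding B_def by auto
        then show "x \<in> mspan n B" unfolding b r_def
          using mspan_add[OF Bc] mspan_smult[OF Bc sB] by blast
      qed
      have "T \<subseteq> mspan n B"
      proof
        fix c assume c: "c \<in> T"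
        have cc: "c \<in> carrier_mat n n" using c T by auto
        have "r c \<in> mspan n B" using mspan_mono[OF Bc \<open>B' \<subseteq> mspan n B\<close>] B'(3) c by blast
        then have "r c + (c $$ p / s $$ p) \<cdot>\<^sub>m s \<in> mspan n B"
          using mspan_add[OF Bc] mspan_smult[OF Bc sB] by blast
        moreover have "r c + (c $$ p / s $$ p) \<cdot>\<^sub>m s = c"
          unfolding r_def using cc sc by (intro eq_matI) auto
        ultimately show "c \<in> mspan n B" by simp
      qed
      then show ?thesis using BT B1(2) unfolding B_def by blast
    qed
  qed
qed

lemma finite_basis:
  assumes "T \<subseteq> carrier_mat n n"
  shows "\<exists>B\<subseteq>T. finite B \<and> T \<subseteq> mspan n (B :: 'k::field mat set)"
proof -
  have "finite ({0..<n} \<times> {0..<n})" by simp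
  from finite_basis_aux[OF this, rule_format, OF assms] show ?thesis by auto
qed


lemma linear_centralizer:
  fixes G :: "('g, 'b) monoid_scheme"
  assumes grp: "group G" and lin: "linear_group_over TYPE('k::field) G"
    and S: "S \<subseteq> carrier G"
  shows "\<exists>B\<subseteq>S. finite B \<and> (\<forall>a\<in>carrier G. (\<forall>b\<in>B. a \<otimes>\<^bsub>G\<^esub> b = b \<otimes>\<^bsub>G\<^esub> a)
            \<longrightarrow> (\<forall>c\<in>S. a \<otimes>\<^bsub>G\<^esub> c = c \<otimes>\<^bsub>G\<^esub> a))"
proof -
  obtain n and H :: "'k mat set" where
    H: "subgroup H (GL n)" and iso: "G \<cong> ((GL n)\<lparr>carrier := H\<rparr>)"
    using lin unfolding linear_group_over_def by blast
  have Hc: "H \<subseteq> carrier_mat n n"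
    using subgroup.subset[OF H] unfolding GL_def by auto
  obtain h where h: "h \<in> iso G ((GL n)\<lparr>carrier := H\<rparr>)"
    using iso unfolding is_iso_def by blast
  have hmap: "h x \<in> H" if "x \<in> carrier G" for x
    using h that unfolding iso_def hom_def by auto
  have hmul: "h (x \<otimes>\<^bsub>G\<^esub> y) = h x * h y" if "x \<in> carrier G" "y \<in> carrier G" for x y
    using h that unfolding iso_def hom_def GL_def by auto
  have hinj: "inj_on h (carrier G)"
    using h unfolding iso_def bij_betw_def by auto
  have "h ` S \<subseteq> carrier_mat n n" using S hmap Hc by blast
  from finite_basis[OF this] obtain B' where
    B': "B' \<subseteq> h ` S" "finite B'" "h ` S \<subseteq> mspan n B'" by blast
  obtain B where B: "B \<subseteq> S" "finite B" "B' = h ` B"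
    using finite_subset_image[OF B'(2) B'(1)] by blast
  have B'c: "B' \<subseteq> carrier_mat n n" using B'(1) \<open>h ` S \<subseteq> carrier_mat n n\<close> by blast
  have "\<forall>a\<in>carrier G. (\<forall>b\<in>B. a \<otimes>\<^bsub>G\<^esub> b = b \<otimes>\<^bsub>G\<^esub> a)
            \<longrightarrow> (\<forall>c\<in>S. a \<otimes>\<^bsub>G\<^esub> c = c \<otimes>\<^bsub>G\<^esub> a)"
  proof (intro ballI impI)
    fix a c assume a: "a \<in> carrier G" and cm: "\<forall>b\<in>B. a \<otimes>\<^bsub>G\<^esub> b = b \<otimes>\<^bsub>G\<^esub> a"
      and c: "c \<in> S"
    have ac: "h a \<in> carrier_mat n n" using hmap[OF a] Hc by blast
    have "\<forall>b'\<in>B'. h a * b' = b' * h a"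
    proof
      fix b' assume "b' \<in> B'"
      then obtain b where b: "b \<in> B" "b' = h b" using B by blast
      have bG: "b \<in> carrier G" using b B S by blast
      show "h a * b' = b' * h a" using cm b bG a hmul by metis
    qed
    from mspan_comm[OF ac B'c this] have "h a * h c = h c * h a" using B'(3) c by blast
    moreover have cG: "c \<in> carrier G" using c S by blast
    ultimately have "h (a \<otimes>\<^bsub>G\<^esub> c) = h (c \<otimes>\<^bsub>G\<^esub> a)" using hmul a by metis
    then show "a \<otimes>\<^bsub>G\<^esub> c = c \<otimes>\<^bsub>G\<^esub> a"
      using hinj a cG group.is_monoid[OF grp] by (meson inj_onD monoid.m_closed)
  qed
  then show ?thesis using B by blast
qed

lemma (in group) comm_inv:
  assumes x: "x \<in> carrier G" and y: "y \<in> carrier G" and e: "x \<otimes> y = y \<otimes> x"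
  shows "inv x \<otimes> y = y \<otimes> inv x"
proof -
  have "inv x \<otimes> y = inv x \<otimes> (y \<otimes> (x \<otimes> inv x))" using x y by simp
  also have "\<dots> = inv x \<otimes> ((y \<otimes> x) \<otimes> inv x)" using x y by (simp add: m_assoc)
  also have "\<dots> = inv x \<otimes> ((x \<otimes> y) \<otimes> inv x)" using e by simp
  also have "\<dots> = (inv x \<otimes> x) \<otimes> (y \<otimes> inv x)" using x y by (metis m_assoc m_closed inv_closed)
  also have "\<dots> = y \<otimes> inv x" using x y by simp
  finally show ?thesis .
qed

lemma (in group) conj_eq_comm:
  assumes x: "x \<in> carrier G" and y: "y \<in> carrier G" and z: "z \<in> carrier G"
    and e: "inv x \<otimes> z \<otimes> x = inv y \<otimes> z \<otimes> y"
  shows "(y \<otimes> inv x) \<otimes> z = z \<otimes> (y \<otimes> inv x)"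
proof -
  have "(y \<otimes> inv x) \<otimes> z = y \<otimes> ((inv x \<otimes> z \<otimes> x) \<otimes> inv x)" using x y z by (simp add: m_assoc)
  also have "\<dots> = y \<otimes> ((inv y \<otimes> z \<otimes> y) \<otimes> inv x)" using e by simp
  also have "\<dots> = (y \<otimes> inv y) \<otimes> (z \<otimes> (y \<otimes> inv x))" using x y z by (metis m_assoc m_closed inv_closed)
  also have "\<dots> = z \<otimes> (y \<otimes> inv x)" using x y z by simp
  finally show ?thesis .
qed


lemma (in group) main:
  assumes lin: "linear_group_over TYPE('k::field) G"
    and fba: "finite_by_abelian G"
  shows "virtually_abelian G"
proof -
  obtain N where NG: "N \<lhd> G" and finN: "finite N" and cg: "comm_group (G Mod N)"
    using fba unfolding finite_by_abelian_def by blast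
  interpret N: normal N G by (rule NG)
  have sgN: "subgroup N G" using NG normal_imp_subgroup by blast
  have Nsub: "N \<subseteq> carrier G" using N.subset .
  have commN: "u \<otimes> v \<otimes> inv u \<otimes> inv v \<in> N" if u: "u \<in> carrier G" and v: "v \<in> carrier G" for u v
  proof -
    have r1: "N #> u \<in> carrier (G Mod N)" using u unfolding FactGroup_def by (simp add: rcosetsI Nsub)
    have r2: "N #> v \<in> carrier (G Mod N)" using v unfolding FactGroup_def by (simp add: rcosetsI Nsub)
    have "(N #> u) \<otimes>\<^bsub>G Mod N\<^esub> (N #> v) = (N #> v) \<otimes>\<^bsub>G Mod N\<^esub> (N #> u)"
      using comm_group.axioms(1)[OF cg] r1 r2 by (meson comm_monoid.m_comm)
    then have "(N #> u) <#> (N #> v) = (N #> v) <#> (N #> u)" unfolding FactGroup_def by simp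
    then have "N #> (u \<otimes> v) = N #> (v \<otimes> u)" using u v by (simp add: N.rcos_sum)
    moreover have "u \<otimes> v \<in> N #> (u \<otimes> v)" using u v sgN by (simp add: rcos_self)
    ultimately have "u \<otimes> v \<in> N #> (v \<otimes> u)" by simp
    then have "(u \<otimes> v) \<otimes> inv (v \<otimes> u) \<in> N"
      using subgroup.rcos_module_imp[OF sgN is_group] u v by blast
    moreover have "(u \<otimes> v) \<otimes> inv (v \<otimes> u) = u \<otimes> v \<otimes> inv u \<otimes> inv v"
      using u v by (simp add: inv_mult_group m_assoc)
    ultimately show ?thesis by simp
  qed
  define C where "C = {x \<in> carrier G. \<forall>n\<in>N. x \<otimes> n = n \<otimes> x}"
  have Csub: "C \<subseteq> carrier G" unfolding C_def by blast
  obtain B where B: "B \<subseteq> C" "finite B"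
    and Bcomm: "\<And>a. a \<in> carrier G \<Longrightarrow> (\<forall>b\<in>B. a \<otimes> b = b \<otimes> a) \<Longrightarrow> (\<forall>c\<in>C. a \<otimes> c = c \<otimes> a)"
    using linear_centralizer[OF is_group lin Csub] by blast
  have BG: "B \<subseteq> carrier G" using B Csub by blast
  define A where "A = {a \<in> C. \<forall>c\<in>C. a \<otimes> c = c \<otimes> a}"
  have AC: "A \<subseteq> C" unfolding A_def by blast
  have AG: "A \<subseteq> carrier G" using AC Csub by blast
  have sgA: "subgroup A G"
  proof (rule subgroupI)
    show "A \<subseteq> carrier G" by (rule AG)
    show "A \<noteq> {}"
    proof -
      have "\<one> \<in> A" unfolding A_def C_def using Nsub by auto
      then show ?thesis by blast
    qed
  next
    fix a assume a: "a \<in> A"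
    then have aG: "a \<in> carrier G" using AG by blast
    have "inv a \<in> C" using a Nsub unfolding A_def C_def by (auto intro!: comm_inv)
    moreover have "\<forall>c\<in>C. inv a \<otimes> c = c \<otimes> inv a" using a Csub unfolding A_def
      by (auto intro!: comm_inv)
    ultimately show "inv a \<in> A" unfolding A_def by blast
  next
    fix a b assume a: "a \<in> A" and b: "b \<in> A"
    have aG: "a \<in> carrier G" and bG: "b \<in> carrier G" using a b AG by blast+
    have comm_mult: "a \<otimes> b \<otimes> c = c \<otimes> (a \<otimes> b)"
      if "c \<in> carrier G" "a \<otimes> c = c \<otimes> a" "b \<otimes> c = c \<otimes> b" for c
    proof -
      have cG: "c \<in> carrier G" by (rule that(1))
      have "a \<otimes> b \<otimes> c = a \<otimes> (b \<otimes> c)" using cG aG bG by (simp add: m_assoc)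
      also have "\<dots> = a \<otimes> (c \<otimes> b)" using that(3) by simp
      also have "\<dots> = (a \<otimes> c) \<otimes> b" using cG aG bG by (simp add: m_assoc)
      also have "\<dots> = (c \<otimes> a) \<otimes> b" using that(2) by simp
      also have "\<dots> = c \<otimes> (a \<otimes> b)" using cG aG bG by (simp add: m_assoc)
      finally show ?thesis .
    qed
    have aC: "a \<in> C" and bC: "b \<in> C" using a b unfolding A_def by blast+
    have "\<forall>n\<in>N. a \<otimes> b \<otimes> n = n \<otimes> (a \<otimes> b)"
    proof
      fix n assume n: "n \<in> N"
      show "a \<otimes> b \<otimes> n = n \<otimes> (a \<otimes> b)"
        by (rule comm_mult) (use n Nsub aC bC in \<open>auto simp: C_def\<close>)
    qed
    then have "a \<otimes> b \<in> C" using aG bG unfolding C_def by blast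
    moreover have "\<forall>c\<in>C. a \<otimes> b \<otimes> c = c \<otimes> (a \<otimes> b)"
    proof
      fix c assume c: "c \<in> C"
      show "a \<otimes> b \<otimes> c = c \<otimes> (a \<otimes> b)"
        by (rule comm_mult) (use c Csub a b in \<open>auto simp: A_def\<close>)
    qed
    ultimately show "a \<otimes> b \<in> A" unfolding A_def by blast
  qed
  have cgA: "comm_group (G\<lparr>carrier := A\<rparr>)"
  proof (rule group.group_comm_groupI[OF subgroup.subgroup_is_group[OF sgA is_group]])
    fix x y assume x: "x \<in> carrier (G\<lparr>carrier := A\<rparr>)" and y: "y \<in> carrier (G\<lparr>carrier := A\<rparr>)"
    have xA: "x \<in> A" using x by simp
    have yC: "y \<in> C" using y AC by simp blast
    have "x \<otimes> y = y \<otimes> x" using xA yC unfolding A_def by blast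
    then show "x \<otimes>\<^bsub>G\<lparr>carrier := A\<rparr>\<^esub> y = y \<otimes>\<^bsub>G\<lparr>carrier := A\<rparr>\<^esub> x" by simp
  qed
  define \<phi> where "\<phi> x = ((\<lambda>n\<in>N. inv x \<otimes> n \<otimes> x), (\<lambda>b\<in>B. inv x \<otimes> b \<otimes> x \<otimes> inv b))" for x
  have \<phi>range: "\<phi> x \<in> (N \<rightarrow>\<^sub>E N) \<times> (B \<rightarrow>\<^sub>E N)" if x: "x \<in> carrier G" for x
  proof -
    have "inv x \<otimes> n \<otimes> x \<in> N" if "n \<in> N" for n
      using N.inv_op_closed2[of "inv x" n] x that by simp
    moreover have "inv x \<otimes> b \<otimes> x \<otimes> inv b \<in> N" if "b \<in> B" for b
      using commN[of "inv x" b] x that BG by auto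
    ultimately show ?thesis unfolding \<phi>_def by auto
  qed
  have \<phi>eq: "A #> x = A #> y" if x: "x \<in> carrier G" and y: "y \<in> carrier G" and e: "\<phi> x = \<phi> y" for x y
  proof -
    define a where "a = y \<otimes> inv x"
    have aG: "a \<in> carrier G" unfolding a_def using x y by simp
    have "a \<otimes> n = n \<otimes> a" if n: "n \<in> N" for n
    proof -
      have "(\<lambda>n\<in>N. inv x \<otimes> n \<otimes> x) n = (\<lambda>n\<in>N. inv y \<otimes> n \<otimes> y) n"
        using e unfolding \<phi>_def by simp
      then have "inv x \<otimes> n \<otimes> x = inv y \<otimes> n \<otimes> y" using n by simp
      then show ?thesis unfolding a_def using conj_eq_comm x y n Nsub by blast
    qed
    then have aC: "a \<in> C" unfolding C_def using aG by blast
    have "a \<otimes> b = b \<otimes> a" if b: "b \<in> B" for b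
    proof -
      have bG: "b \<in> carrier G" using b BG by blast
      have "(\<lambda>b\<in>B. inv x \<otimes> b \<otimes> x \<otimes> inv b) b = (\<lambda>b\<in>B. inv y \<otimes> b \<otimes> y \<otimes> inv b) b"
        using e unfolding \<phi>_def by simp
      then have "inv x \<otimes> b \<otimes> x \<otimes> inv b = inv y \<otimes> b \<otimes> y \<otimes> inv b" using b by simp
      then have "inv x \<otimes> b \<otimes> x = inv y \<otimes> b \<otimes> y"
        using x y bG by (meson inv_closed m_closed right_cancel)
      then show ?thesis unfolding a_def using conj_eq_comm x y bG by blast
    qed
    then have "\<forall>c\<in>C. a \<otimes> c = c \<otimes> a" using Bcomm aG by blast
    then have aA: "a \<in> A" unfolding A_def using aC by blast
    have "y = a \<otimes> x" unfolding a_def using x y by (simp add: m_assoc)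
    then have "A #> y = (A #> a) #> x" using coset_mult_assoc AG aG x by simp
    also have "\<dots> = A #> x" using coset_join2[OF aG sgA aA] by simp
    finally show ?thesis by simp
  qed
  define R where "R = (N \<rightarrow>\<^sub>E N) \<times> (B \<rightarrow>\<^sub>E N)"
  have finR: "finite R" unfolding R_def using finN B(2) by (simp add: finite_PiE)
  have "rcosets A \<subseteq> (\<lambda>v. A #> (SOME x. x \<in> carrier G \<and> \<phi> x = v)) ` R"
  proof
    fix X assume "X \<in> rcosets A"
    then obtain x where x: "x \<in> carrier G" "X = A #> x" unfolding RCOSETS_def by blast
    let ?x' = "SOME x'. x' \<in> carrier G \<and> \<phi> x' = \<phi> x"
    have "?x' \<in> carrier G \<and> \<phi> ?x' = \<phi> x" by (rule someI[of _ x]) (use x in auto)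
    then have "A #> ?x' = A #> x" using \<phi>eq x by blast
    moreover have "\<phi> x \<in> R" using \<phi>range x unfolding R_def by blast
    ultimately show "X \<in> (\<lambda>v. A #> (SOME x. x \<in> carrier G \<and> \<phi> x = v)) ` R"
      using x by force
  qed
  then have "finite (rcosets A)" using finR finite_surj by blast
  then show ?thesis unfolding virtually_abelian_def using sgA cgA by blast
qed

theorem lemma2:
  fixes G :: "('g, 'b) monoid_scheme"
  assumes "group G"
    and "linear_group_over TYPE('k::field) G"
    and "finite_by_abelian G"
  shows "virtually_abelian G"
  using group.main[OF assms(1) assms(2) assms(3)] .

end
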